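(* Let $X$ be a finite set, $t_1<\dots<t_M$ real numbers and $(\mathcal{P}^{t_m})_{m\le M}$ partitions of $X$, with associated continuous-indexed Multiscale Clustering Filtration $(K^t)_{t\ge t_1}$ and partitions $\mathcal{P}^t$. For each $t\ge t_1$, the $0$-th Betti number $\beta_0^t$ of $K^t$ satisfies: (i) $\beta_0^t\le \min_{s\le t}\#\mathcal{P}^s$; (ii) $\beta_0^t=\#\mathcal{P}^t$ if and only if $\mathcal{P}^t$ is non-fractured.
   Context: A partition of $X$ is a collection of non-empty pairwise disjoint subsets (clusters) whose union is $X$; $\#\mathcal{P}$ is its number of clusters. For partitions $\mathcal{P},\mathcal{Q}$, $\mathcal{P}\le\mathcal{Q}$ ($\mathcal{P}$ refines $\mathcal{Q}$) means every cluster of $\mathcal{P}$ is contained in a cluster of $\mathcal{Q}$. For a finite non-empty set $C$, $\Delta C$ is the set of all non-empty subsets of $C$. The MCF is $K^{t_m}:=\bigcup_{l\le m}\bigcup_{C\in\mathcal{P}^{t_l}}\Delta C$. For real $t$, set $\mathcal{P}^t:=\mathcal{P}^{t_m}$ where $m$ is the largest index with $t_m\le t$ (and $\mathcal{P}^t:=\mathcal{P}^{t_1}$ if $t<t_1$), and for $t\ge t_1$ set $K^t:=K^{t_m}$ with the same $m$. $\beta_0^t$ is the rank of $H_0(K^t)$, i.e. the number of connected components of $K^t$. The partition $\mathcal{P}^t$ is non-fractured if $\mathcal{P}^s\le\mathcal{P}^t$ for all $s\le t$, and fractured otherwise. *)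

theory Defs
  imports Complex_Main "HOL-Library.Disjoint_Sets"
begin

text \<open>Partitions are indexed by m in {1..M}; times by t :: nat => real.\<close>

definition refines :: "'a set set \<Rightarrow> 'a set set \<Rightarrow> bool" where
  "refines P Q \<longleftrightarrow> (\<forall>C\<in>P. \<exists>D\<in>Q. C \<subseteq> D)"

definition Delta :: "'a set \<Rightarrow> 'a set set" where
  "Delta C = {S. S \<subseteq> C \<and> S \<noteq> {}}"

definition MCF :: "(nat \<Rightarrow> 'a set set) \<Rightarrow> nat \<Rightarrow> 'a set set" where
  "MCF P m = (\<Union>l\<in>{1..m}. \<Union>C\<in>P l. Delta C)"

text \<open>Largest index m in {1..M} with t_m <= s (meaningful for s >= t_1).\<close>
definition idx :: "(nat \<Rightarrow> real) \<Rightarrow> nat \<Rightarrow> real \<Rightarrow> nat" where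
  "idx tt M s = (GREATEST m. m \<in> {1..M} \<and> tt m \<le> s)"

definition Pt :: "(nat \<Rightarrow> real) \<Rightarrow> nat \<Rightarrow> (nat \<Rightarrow> 'a set set) \<Rightarrow> real \<Rightarrow> 'a set set" where
  "Pt tt M P s = (if s < tt 1 then P 1 else P (idx tt M s))"

definition Kt :: "(nat \<Rightarrow> real) \<Rightarrow> nat \<Rightarrow> (nat \<Rightarrow> 'a set set) \<Rightarrow> real \<Rightarrow> 'a set set" where
  "Kt tt M P s = MCF P (idx tt M s)"

text \<open>Connected components of an abstract simplicial complex K: vertices are the
  elements of simplices, two vertices are adjacent if they lie in a common simplex;
  beta_0 is the number of classes of the transitive closure.\<close>
definition adj :: "'a set set \<Rightarrow> ('a \<times> 'a) set" where
  "adj K = {(x, y). \<exists>\<sigma>\<in>K. x \<in> \<sigma> \<and> y \<in> \<sigma>}"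

definition beta0 :: "'a set set \<Rightarrow> nat" where
  "beta0 K = card ((\<Union>K) // ((adj K)\<^sup>+))"

definition non_fractured :: "(nat \<Rightarrow> real) \<Rightarrow> nat \<Rightarrow> (nat \<Rightarrow> 'a set set) \<Rightarrow> real \<Rightarrow> bool" where
  "non_fractured tt M P t \<longleftrightarrow> (\<forall>s\<le>t. refines (Pt tt M P s) (Pt tt M P t))"

end

theory Submission
  imports Defs
begin

lemma idx_props:
  assumes "M \<ge> 1" "tt 1 \<le> s"
  shows "idx tt M s \<in> {1..M}" "tt (idx tt M s) \<le> s"
    "\<And>k. k \<in> {1..M} \<Longrightarrow> tt k \<le> s \<Longrightarrow> k \<le> idx tt M s"
proof -
  have ex: "1 \<in> {1..M} \<and> tt 1 \<le> s" using assms by auto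
  have bd: "\<And>y. y \<in> {1..M} \<and> tt y \<le> s \<Longrightarrow> y \<le> M" by auto
  have "idx tt M s \<in> {1..M} \<and> tt (idx tt M s) \<le> s"
    unfolding idx_def by (rule GreatestI_nat[of "\<lambda>y. y \<in> {1..M} \<and> tt y \<le> s", OF ex bd])
  then show "idx tt M s \<in> {1..M}" "tt (idx tt M s) \<le> s" by auto
  fix k assume "k \<in> {1..M}" "tt k \<le> s"
  then show "k \<le> idx tt M s" unfolding idx_def
    by (intro Greatest_le_nat[of "\<lambda>y. y \<in> {1..M} \<and> tt y \<le> s", OF _ bd]) auto
qed

lemma idx_tt:
  assumes "\<And>i j. 1 \<le> i \<Longrightarrow> i < j \<Longrightarrow> j \<le> M \<Longrightarrow> tt i < tt j" "l \<in> {1..M}"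
  shows "idx tt M (tt l) = l"
  unfolding idx_def
proof (rule Greatest_equality)
  show "l \<in> {1..M} \<and> tt l \<le> tt l" using assms by auto
  fix y assume "y \<in> {1..M} \<and> tt y \<le> tt l"
  then show "y \<le> l" using assms(1)[of l y] assms(2) by force
qed

locale mcfl =
  fixes X :: "'a set" and P :: "nat \<Rightarrow> 'a set set" and m :: nat
  assumes finX: "finite X" and m1: "m \<ge> 1"
    and part: "\<And>l. l \<in> {1..m} \<Longrightarrow> partition_on X (P l)"
begin

abbreviation "K \<equiv> MCF P m"
abbreviation "R \<equiv> (adj K)\<^sup>+"

lemma K_mem: "\<sigma> \<in> K \<longleftrightarrow> (\<exists>l\<in>{1..m}. \<exists>C\<in>P l. \<sigma> \<subseteq> C \<and> \<sigma> \<noteq> {})"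
  unfolding MCF_def Delta_def by auto

lemma cl_sub: "l \<in> {1..m} \<Longrightarrow> C \<in> P l \<Longrightarrow> C \<subseteq> X"
  using part unfolding partition_on_def by blast

lemma cl_ne: "l \<in> {1..m} \<Longrightarrow> C \<in> P l \<Longrightarrow> C \<noteq> {}"
  using part unfolding partition_on_def by blast

lemma cl_ex: "l \<in> {1..m} \<Longrightarrow> x \<in> X \<Longrightarrow> \<exists>C\<in>P l. x \<in> C"
  using part unfolding partition_on_def by blast

lemma cl_disj: "l \<in> {1..m} \<Longrightarrow> C \<in> P l \<Longrightarrow> D \<in> P l \<Longrightarrow> x \<in> C \<Longrightarrow> x \<in> D \<Longrightarrow> C = D"
  using part unfolding partition_on_def disjoint_def by blast

lemma cl_K: "l \<in> {1..m} \<Longrightarrow> C \<in> P l \<Longrightarrow> C \<in> K"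
  using K_mem cl_ne by blast

lemma UK: "\<Union>K = X"
proof
  show "\<Union>K \<subseteq> X"
  proof
    fix x assume "x \<in> \<Union>K"
    then obtain \<sigma> where "\<sigma> \<in> K" "x \<in> \<sigma>" by blast
    then obtain l C where "l \<in> {1..m}" "C \<in> P l" "\<sigma> \<subseteq> C" using K_mem[THEN iffD1] by blast
    then show "x \<in> X" using cl_sub \<open>x \<in> \<sigma>\<close> by blast
  qed
  show "X \<subseteq> \<Union>K"
  proof
    fix x assume "x \<in> X"
    have one: "(1::nat) \<in> {1..m}" using m1 by simp
    obtain C where C: "C \<in> P 1" "x \<in> C" using cl_ex[OF one \<open>x \<in> X\<close>] by blast
    have "C \<in> K" by (rule cl_K[OF one C(1)])
    then show "x \<in> \<Union>K" using C(2) by (rule UnionI)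
  qed
qed

lemma adj_sub: "adj K \<subseteq> X \<times> X"
  using UK unfolding adj_def by blast

lemma R_equiv: "equiv X R"
proof (rule equivI)
  show "R \<subseteq> X \<times> X" by (rule trancl_subset_Sigma[OF adj_sub])
  have "(x, x) \<in> R" if "x \<in> X" for x
  proof -
    have "x \<in> \<Union>K" using UK that by simp
    then have "(x, x) \<in> adj K" unfolding adj_def by blast
    then show ?thesis by blast
  qed
  then show "refl_on X R" unfolding refl_on_def by blast
  have "sym (adj K)" unfolding adj_def sym_def by blast
  then show "sym R" by (rule sym_trancl)
  show "trans R" by simp
qed

lemma cl_R: "l \<in> {1..m} \<Longrightarrow> C \<in> P l \<Longrightarrow> x \<in> C \<Longrightarrow> y \<in> C \<Longrightarrow> (x, y) \<in> R"
  using cl_K unfolding adj_def by blast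

lemma img_cl: "l \<in> {1..m} \<Longrightarrow> C \<in> P l \<Longrightarrow> x \<in> C \<Longrightarrow> R `` C = R `` {x}"
proof
  assume a: "l \<in> {1..m}" "C \<in> P l" "x \<in> C"
  show "R `` {x} \<subseteq> R `` C" using a by blast
  show "R `` C \<subseteq> R `` {x}"
  proof
    fix z assume "z \<in> R `` C"
    then obtain y where "y \<in> C" "(y, z) \<in> R" by blast
    moreover have "(x, y) \<in> R" using cl_R a \<open>y \<in> C\<close> by blast
    ultimately show "z \<in> R `` {x}" by (meson ImageI insertI1 trancl_trans)
  qed
qed

lemma Q_img: "l \<in> {1..m} \<Longrightarrow> X // R = (\<lambda>C. R `` C) ` P l"
proof
  assume l: "l \<in> {1..m}"
  show "X // R \<subseteq> (\<lambda>C. R `` C) ` P l"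
  proof
    fix q assume "q \<in> X // R"
    then obtain x where x: "x \<in> X" "q = R `` {x}" by (auto elim: quotientE)
    then obtain C where "C \<in> P l" "x \<in> C" using cl_ex l by blast
    then show "q \<in> (\<lambda>C. R `` C) ` P l" using img_cl[OF l] x by (intro image_eqI[of _ _ C]) auto
  qed
  show "(\<lambda>C. R `` C) ` P l \<subseteq> X // R"
  proof
    fix q assume "q \<in> (\<lambda>C. R `` C) ` P l"
    then obtain C where C: "C \<in> P l" "q = R `` C" by blast
    then obtain x where "x \<in> C" using cl_ne l by blast
    moreover have "x \<in> X" using cl_sub[OF l C(1)] calculation by blast
    ultimately show "q \<in> X // R" using C img_cl[OF l] by (auto intro: quotientI)
  qed
qed

lemma finP: "l \<in> {1..m} \<Longrightarrow> finite (P l)"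
proof -
  assume l: "l \<in> {1..m}"
  have "P l \<subseteq> Pow X" using cl_sub[OF l] by blast
  then show ?thesis using finX finite_subset by blast
qed

lemma beta_le: "l \<in> {1..m} \<Longrightarrow> beta0 K \<le> card (P l)"
proof -
  assume l: "l \<in> {1..m}"
  have "card ((\<lambda>C. R `` C) ` P l) \<le> card (P l)" by (rule card_image_le[OF finP[OF l]])
  then show ?thesis unfolding beta0_def UK Q_img[OF l] .
qed

lemma eq_imp_ref:
  assumes "beta0 K = card (P m)" "l \<in> {1..m}" "C \<in> P l"
  shows "\<exists>D\<in>P m. C \<subseteq> D"
proof -
  have mm: "m \<in> {1..m}" using m1 by simp
  have "card ((\<lambda>C. R `` C) ` P m) = card (P m)"
    using assms(1) Q_img[OF mm] unfolding beta0_def UK by simp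
  then have inj: "inj_on (\<lambda>C. R `` C) (P m)"
    using finP[OF mm] eq_card_imp_inj_on by blast
  obtain x where x: "x \<in> C" using cl_ne assms by blast
  then have xX: "x \<in> X" using cl_sub assms by blast
  obtain D where D: "D \<in> P m" "x \<in> D" using cl_ex[OF mm xX] by blast
  have "C \<subseteq> D"
  proof
    fix y assume y: "y \<in> C"
    then have yX: "y \<in> X" using cl_sub assms by blast
    obtain D' where D': "D' \<in> P m" "y \<in> D'" using cl_ex[OF mm yX] by blast
    have "(x, y) \<in> R" using cl_R assms x y by blast
    then have "R `` {x} = R `` {y}" by (rule equiv_class_eq[OF R_equiv])
    moreover have "R `` D = R `` {x}" by (rule img_cl[OF mm D])
    moreover have "R `` D' = R `` {y}" by (rule img_cl[OF mm D'])
    ultimately have "R `` D = R `` D'" by simp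
    then have "D = D'" using inj D D' unfolding inj_on_def by blast
    then show "y \<in> D" using D' by simp
  qed
  then show ?thesis using D by blast
qed

lemma ref_imp_eq:
  assumes "\<And>l C. l \<in> {1..m} \<Longrightarrow> C \<in> P l \<Longrightarrow> \<exists>D\<in>P m. C \<subseteq> D"
  shows "beta0 K = card (P m)"
proof -
  have mm: "m \<in> {1..m}" using m1 by simp
  have "R `` D = D" if D: "D \<in> P m" for D
  proof
    show "D \<subseteq> R `` D" using D cl_R[OF mm] by blast
    define S where "S = {(x, y). \<exists>D\<in>P m. x \<in> D \<and> y \<in> D}"
    have adjS: "adj K \<subseteq> S"
    proof
      fix p assume "p \<in> adj K"
      then obtain x y \<sigma> where p: "p = (x, y)" "\<sigma> \<in> K" "x \<in> \<sigma>" "y \<in> \<sigma>"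
        unfolding adj_def by blast
      then obtain l C where "l \<in> {1..m}" "C \<in> P l" "\<sigma> \<subseteq> C" using K_mem[THEN iffD1] by blast
      then obtain D where "D \<in> P m" "C \<subseteq> D" using assms by blast
      then show "p \<in> S" using p \<open>\<sigma> \<subseteq> C\<close> unfolding S_def by blast
    qed
    moreover have "trans S"
    proof (rule transI)
      fix x y z assume "(x, y) \<in> S" "(y, z) \<in> S"
      then obtain D1 D2 where "D1 \<in> P m" "x \<in> D1" "y \<in> D1" "D2 \<in> P m" "y \<in> D2" "z \<in> D2"
        unfolding S_def by blast
      moreover then have "D1 = D2" using cl_disj[OF mm] by blast
      ultimately show "(x, z) \<in> S" unfolding S_def by blast
    qed
    ultimately have "R \<subseteq> S"
    proof -
      have "R \<subseteq> S\<^sup>+" by (rule trancl_mono_subset[OF adjS])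
      then show ?thesis using trancl_id[OF \<open>trans S\<close>] by simp
    qed
    then show "R `` D \<subseteq> D" using D cl_disj[OF mm] unfolding S_def by blast
  qed
  then have "X // R = P m" using Q_img[OF mm] by simp
  then show ?thesis unfolding beta0_def UK by simp
qed

end

theorem proposition3:
  fixes X :: "'a set" and M :: nat and tt :: "nat \<Rightarrow> real"
    and P :: "nat \<Rightarrow> 'a set set" and t :: real
  assumes "finite X"
    and "M \<ge> 1"
    and "\<And>i j. 1 \<le> i \<Longrightarrow> i < j \<Longrightarrow> j \<le> M \<Longrightarrow> tt i < tt j"
    and "\<And>m. m \<in> {1..M} \<Longrightarrow> partition_on X (P m)"
    and "t \<ge> tt 1"
  shows "beta0 (Kt tt M P t) \<le> Min {card (Pt tt M P s) | s. s \<le> t}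
    \<and> (beta0 (Kt tt M P t) = card (Pt tt M P t) \<longleftrightarrow> non_fractured tt M P t)"
proof -
  define m where "m = idx tt M t"
  have m: "m \<in> {1..M}" "tt m \<le> t" using idx_props(1,2)[of M tt t, OF assms(2) assms(5)] m_def by auto
  interpret mcfl X P m
    using assms(1,4) m by unfold_locales auto
  have Kt: "Kt tt M P t = K" unfolding Kt_def m_def by simp
  have Ptt: "Pt tt M P t = P m" unfolding Pt_def m_def using assms(5) by simp
  have Ps: "\<exists>l\<in>{1..m}. Pt tt M P s = P l" if "s \<le> t" for s
  proof (cases "s < tt 1")
    case True then show ?thesis unfolding Pt_def using m by auto
  next
    case False
    then have "idx tt M s \<in> {1..M}" "tt (idx tt M s) \<le> s"
      using idx_props(1,2)[of M tt s, OF assms(2)] by auto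
    moreover have "idx tt M s \<le> m" using calculation idx_props(3)[of M tt t, OF assms(2) assms(5)] that
      unfolding m_def by fastforce
    ultimately show ?thesis unfolding Pt_def using False by auto
  qed
  have part1: "beta0 K \<le> Min {card (Pt tt M P s) | s. s \<le> t}"
  proof -
    let ?A = "{card (Pt tt M P s) | s. s \<le> t}"
    have "?A \<subseteq> (\<lambda>l. card (P l)) ` {1..m}" using Ps by fastforce
    then have "finite ?A" using finite_subset by blast
    moreover have "?A \<noteq> {}" by blast
    ultimately have "Min ?A \<in> ?A" by (rule Min_in)
    then obtain s where "s \<le> t" "Min ?A = card (Pt tt M P s)" by blast
    moreover obtain l where "l \<in> {1..m}" "Pt tt M P s = P l" using Ps[OF \<open>s \<le> t\<close>] by blast
    ultimately show ?thesis using beta_le[of l] by simp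
  qed
  have part2: "beta0 K = card (P m) \<longleftrightarrow> non_fractured tt M P t"
  proof
    assume eq: "beta0 K = card (P m)"
    show "non_fractured tt M P t" unfolding non_fractured_def Ptt refines_def
    proof (intro allI impI ballI)
      fix s C assume "s \<le> t" "C \<in> Pt tt M P s"
      then obtain l where "l \<in> {1..m}" "C \<in> P l" using Ps[of s] by auto
      then show "\<exists>D\<in>P m. C \<subseteq> D" using eq_imp_ref eq by blast
    qed
  next
    assume nf: "non_fractured tt M P t"
    show "beta0 K = card (P m)"
    proof (rule ref_imp_eq)
      fix l C assume l: "l \<in> {1..m}" "C \<in> P l"
      have lM: "l \<in> {1..M}" using l m by auto
      have "tt l \<le> tt m" using assms(3)[of l m] l m by (cases "l = m") auto
      then have "tt l \<le> t" using m by simp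
      moreover have il: "idx tt M (tt l) = l" by (rule idx_tt[of M tt l, OF assms(3) lM])
      moreover have "Pt tt M P (tt l) = P l"
        unfolding Pt_def using il assms(3)[of 1 l] lM
        by (cases "l = 1") auto
      ultimately show "\<exists>D\<in>P m. C \<subseteq> D"
      proof -
        have "refines (Pt tt M P (tt l)) (P m)" using nf \<open>tt l \<le> t\<close>
          unfolding non_fractured_def Ptt by blast
        then show ?thesis using l \<open>Pt tt M P (tt l) = P l\<close> unfolding refines_def by blast
      qed
    qed
  qed
  show ?thesis using part1 part2 Kt Ptt by simp
qed

end
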